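(* Let $a\geq 3$ and $m\geq 1$ be integers. There is a bijective correspondence between right $0$-pyramids of pieces of length $a$ and of size $m$, and $a$-ary trees with $m$ nodes.
   Context: For a positive integer $n$, an $n$-ary tree is a planar rooted tree all of whose vertices have order (degree) $1$ or $n+1$ and whose root has order $1$; the vertices of order $n+1$ are called nodes. A piece is an open interval $]s,s+a[$ with $s\in\mathbb Z$; two pieces are concurrent iff their intervals intersect. A heap is a finite configuration obtained by successively dropping pieces vertically towards the horizontal axis, each coming to rest on the axis or on top of the highest previously placed piece whose interval meets its own; configurations (not dropping orders) are counted. A pyramid is a heap with a unique bottom piece (exactly one piece on the axis); its size is its number of pieces. A right $0$-pyramid is a pyramid whose bottom piece covers $]0,a[$ and is a leftmost piece (no piece covers $]t,t+a[$ with $t<0$). *)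

theory Defs
  imports Main "HOL.Real"
begin

text \<open>A placed piece is a pair (s, h): the piece covers the open interval ]s, s+a[
  and sits at level h (h = 0 means it lies on the horizontal axis).\<close>

definition concurrent :: "nat \<Rightarrow> int \<Rightarrow> int \<Rightarrow> bool" where
  "concurrent a s t \<longleftrightarrow>
     {x::real. of_int s < x \<and> x < of_int s + of_nat a} \<inter>
     {x::real. of_int t < x \<and> x < of_int t + of_nat a} \<noteq> {}"

definition drop_level :: "nat \<Rightarrow> (int \<times> nat) set \<Rightarrow> int \<Rightarrow> nat" where
  "drop_level a H s =
     (if \<exists>(t, h) \<in> H. concurrent a s t
      then Suc (Max {h. \<exists>t. (t, h) \<in> H \<and> concurrent a s t})
      else 0)"

inductive heap :: "nat \<Rightarrow> (int \<times> nat) set \<Rightarrow> bool" for a :: nat where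
  heap_empty: "heap a {}"
| heap_drop: "heap a H \<Longrightarrow> heap a (insert (s, drop_level a H s) H)"

definition pyramid :: "nat \<Rightarrow> (int \<times> nat) set \<Rightarrow> bool" where
  "pyramid a H \<longleftrightarrow> heap a H \<and> card {p \<in> H. snd p = 0} = 1"

definition right_zero_pyramid :: "nat \<Rightarrow> (int \<times> nat) set \<Rightarrow> bool" where
  "right_zero_pyramid a H \<longleftrightarrow>
     pyramid a H \<and> (0, 0) \<in> H \<and> (\<forall>(t, h) \<in> H. \<not> t < 0)"

datatype ptree = PT "ptree list"

fun children :: "ptree \<Rightarrow> ptree list" where
  "children (PT cs) = cs"

text \<open>Every non-root vertex has order (number of children + 1); the root has order
  (number of children).  nonroot_ok n t: every vertex of t, regarded as a non-root vertex,
  has order 1 or n+1.\<close>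

fun nonroot_ok :: "nat \<Rightarrow> ptree \<Rightarrow> bool" where
  "nonroot_ok n (PT cs) =
     ((length cs + 1 = 1 \<or> length cs + 1 = n + 1) \<and> list_all (nonroot_ok n) cs)"

definition nary_tree :: "nat \<Rightarrow> ptree \<Rightarrow> bool" where
  "nary_tree n t \<longleftrightarrow> length (children t) = 1 \<and> list_all (nonroot_ok n) (children t)"

fun nonroot_nodes :: "nat \<Rightarrow> ptree \<Rightarrow> nat" where
  "nonroot_nodes n (PT cs) =
     (if length cs + 1 = n + 1 then 1 else 0) + sum_list (map (nonroot_nodes n) cs)"

definition num_nodes :: "nat \<Rightarrow> ptree \<Rightarrow> nat" where
  "num_nodes n t =
     (if length (children t) = n + 1 then 1 else 0) + sum_list (map (nonroot_nodes n) (children t))"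

end

theory Submission
  imports Defs
begin

definition conc :: "nat \<Rightarrow> int \<Rightarrow> int \<Rightarrow> bool" where
  "conc a s t \<longleftrightarrow> \<bar>s - t\<bar> < int a"

lemma concurrent_iff: "concurrent a s t \<longleftrightarrow> conc a s t"
proof
  assume "concurrent a s t"
  then obtain x :: real where x: "of_int s < x" "x < of_int s + of_nat a" "of_int t < x" "x < of_int t + of_nat a"
    unfolding concurrent_def by auto
  have "real_of_int (s - t) < real_of_int (int a)" "real_of_int (t - s) < real_of_int (int a)" using x by auto
  then have "s - t < int a" "t - s < int a" by linarith+
  then show "conc a s t" unfolding conc_def by auto
next
  assume "conc a s t"
  hence h: "s - t \<le> int a - 1" "t - s \<le> int a - 1" unfolding conc_def by auto
  define x :: real where "x = of_int (max s t) + 1/2"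
  have h': "real_of_int (s - t) \<le> real_of_int (int a - 1)" "real_of_int (t - s) \<le> real_of_int (int a - 1)"
    using h by (simp_all only: of_int_le_iff)
  have "of_int s < x \<and> x < of_int s + of_nat a \<and> of_int t < x \<and> x < of_int t + of_nat a"
    using h' unfolding x_def by (auto simp: max_def)
  then show "concurrent a s t" unfolding concurrent_def by auto
qed

fun w :: "ptree \<Rightarrow> int list" and wl :: "int \<Rightarrow> ptree list \<Rightarrow> int list" where
  "w (PT cs) = (if cs = [] then [] else 0 # wl 0 cs)"
| "wl j [] = []"
| "wl j (c # cs) = wl (j+1) cs @ map (\<lambda>x. x + j) (w c)"

fun r :: "ptree \<Rightarrow> ptree" and rl :: "ptree list \<Rightarrow> ptree list" where
  "r (PT cs) = (if list_all (\<lambda>c. c = PT []) cs then PT [] else PT (rl cs))"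
| "rl [] = []"
| "rl (c # cs) = (if c = PT [] then c # rl cs else r c # cs)"

fun lp :: "ptree \<Rightarrow> int" and ll :: "int \<Rightarrow> ptree list \<Rightarrow> int" where
  "lp (PT cs) = (if list_all (\<lambda>c. c = PT []) cs then 0 else ll 0 cs)"
| "ll j [] = 0"
| "ll j (c # cs) = (if c = PT [] then ll (j+1) cs else j + lp c)"

lemma conc_sym: "conc a s t = conc a t s" unfolding conc_def by auto
lemma conc_refl: "a > 0 \<Longrightarrow> conc a s s" unfolding conc_def by auto
lemma conc_shift[simp]: "conc a (s + j) (t + j) = conc a s t" unfolding conc_def by auto

lemma drop_level_conc: "drop_level a H s = (if \<exists>(t,h)\<in>H. conc a s t
   then Suc (Max {h. \<exists>t. (t,h)\<in>H \<and> conc a s t}) else 0)"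
  by (simp add: drop_level_def concurrent_iff)

definition stp :: "nat \<Rightarrow> (int \<times> nat) set \<Rightarrow> int \<Rightarrow> (int \<times> nat) set" where
  "stp a H s = insert (s, drop_level a H s) H"
definition hpf :: "nat \<Rightarrow> (int \<times> nat) set \<Rightarrow> int list \<Rightarrow> (int \<times> nat) set" where
  "hpf a B ws = foldl (stp a) B ws"

lemma hpf_Nil[simp]: "hpf a B [] = B" by (simp add: hpf_def)
lemma hpf_Cons[simp]: "hpf a B (x # xs) = hpf a (stp a B x) xs" by (simp add: hpf_def)
lemma hpf_append: "hpf a B (u @ v) = hpf a (hpf a B u) v" by (simp add: hpf_def)
lemma hpf_snoc: "hpf a B (u @ [s]) = stp a (hpf a B u) s" by (simp add: hpf_def)

lemma finite_hpf: "finite B \<Longrightarrow> finite (hpf a B ws)"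
  by (induction ws arbitrary: B) (auto simp: stp_def)

lemma dl_gt: assumes "finite H" "(t,h) \<in> H" "conc a s t" shows "h < drop_level a H s"
proof -
  have fin: "finite {h. \<exists>t. (t,h)\<in>H \<and> conc a s t}"
    by (rule finite_subset[of _ "snd ` H"]) (use assms in force)+
  have "h \<le> Max {h. \<exists>t. (t,h)\<in>H \<and> conc a s t}" using assms fin by (intro Max_ge) auto
  thus ?thesis using assms unfolding drop_level_conc by auto
qed

lemma dl_pos: "(t,h) \<in> H \<Longrightarrow> conc a s t \<Longrightarrow> drop_level a H s > 0"
  unfolding drop_level_conc by auto

lemma dl_zero: "drop_level a H s > 0 \<Longrightarrow> \<exists>(t,h)\<in>H. conc a s t"
  unfolding drop_level_conc by (auto split: if_splits)

lemma dl_insert: "\<not> conc a s t \<Longrightarrow> drop_level a (insert (t,e) B) s = drop_level a B s"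
proof -
  assume n: "\<not> conc a s t"
  have "{h. \<exists>t'. (t',h) \<in> insert (t,e) B \<and> conc a s t'} = {h. \<exists>t'. (t',h)\<in>B \<and> conc a s t'}"
    using n by auto
  moreover have "(\<exists>(t',h)\<in>insert (t,e) B. conc a s t') = (\<exists>(t',h)\<in>B. conc a s t')" using n by auto
  ultimately show ?thesis unfolding drop_level_conc by simp
qed

lemma new_notin: "a > 0 \<Longrightarrow> finite H \<Longrightarrow> (s, drop_level a H s) \<notin> H"
  using dl_gt[of H s "drop_level a H s" a s] conc_refl by auto

lemma card_hpf: "a > 0 \<Longrightarrow> finite B \<Longrightarrow> card (hpf a B ws) = card B + length ws"
proof (induction ws arbitrary: B)
  case (Cons x ws)
  have "card (stp a B x) = Suc (card B)" using new_notin[OF Cons.prems] Cons.prems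
    by (simp add: stp_def)
  then show ?case using Cons by (simp add: stp_def)
qed simp

lemma fst_hpf: "fst ` hpf a B ws = fst ` B \<union> set ws"
  by (induction ws arbitrary: B) (auto simp: stp_def)

lemma heap_hpf: "heap a B \<Longrightarrow> heap a (hpf a B ws)"
  by (induction ws arbitrary: B) (auto simp: stp_def intro: heap.heap_drop)

lemma heap_finite: "heap a H \<Longrightarrow> finite H"
  by (induction rule: heap.induct) auto

lemma heap_hp: "heap a H \<Longrightarrow> \<exists>ws. H = hpf a {} ws"
proof (induction rule: heap.induct)
  case heap_empty
  then show ?case by (intro exI[of _ "[]"]) simp
next
  case (heap_drop H s)
  then obtain ws where "H = hpf a {} ws" by auto
  then show ?case by (intro exI[of _ "ws @ [s]"]) (simp add: hpf_snoc stp_def)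
qed

lemma hpf_mono: "B \<subseteq> hpf a B ws"
proof (induction ws arbitrary: B)
  case (Cons x ws) then show ?case by (simp add: stp_def) (meson dual_order.trans subset_insertI)
qed simp

definition eqv :: "nat \<Rightarrow> int list \<Rightarrow> int list \<Rightarrow> bool" where
  "eqv a u v \<longleftrightarrow> (\<forall>B. hpf a B u = hpf a B v)"

lemma eqv_refl: "eqv a u u" by (simp add: eqv_def)
lemma eqv_sym: "eqv a u v \<Longrightarrow> eqv a v u" by (simp add: eqv_def)
lemma eqv_trans: "eqv a u v \<Longrightarrow> eqv a v x \<Longrightarrow> eqv a u x" by (simp add: eqv_def)
lemma eqv_app: "eqv a u v \<Longrightarrow> eqv a u' v' \<Longrightarrow> eqv a (u @ u') (v @ v')"
  by (simp add: eqv_def hpf_append)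

lemma eqv_swap: assumes "\<not> conc a x y" shows "eqv a [x,y] [y,x]"
  unfolding eqv_def
proof
  fix B
  have n: "\<not> conc a y x" using assms conc_sym by metis
  show "hpf a B [x, y] = hpf a B [y, x]"
    using dl_insert[OF assms] dl_insert[OF n] by (auto simp: stp_def)
qed

lemma eqv_commute: "\<forall>y\<in>set u. \<not> conc a s y \<Longrightarrow> eqv a (u @ [s]) (s # u)"
proof (induction u)
  case Nil then show ?case by (simp add: eqv_refl)
next
  case (Cons x u)
  have 1: "eqv a ([x] @ (u @ [s])) ([x] @ (s # u))"
    using Cons by (intro eqv_app eqv_refl) auto
  have "\<not> conc a x s" using Cons.prems conc_sym by auto
  hence 2: "eqv a ([x, s] @ u) ([s, x] @ u)"
    by (intro eqv_app eqv_refl eqv_swap)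
  show ?case using eqv_trans[OF 1] 2 by simp
qed

definition shs :: "int \<Rightarrow> (int \<times> nat) set \<Rightarrow> (int \<times> nat) set" where
  "shs j B = (\<lambda>(t,h). (t + j, h)) ` B"

lemma dl_shift: "drop_level a (shs j B) (s + j) = drop_level a B s"
proof -
  have "{h. \<exists>t. (t,h)\<in>shs j B \<and> conc a (s+j) t} = {h. \<exists>t. (t,h)\<in>B \<and> conc a s t}"
  proof (intro set_eqI iffI)
  fix h assume "h \<in> {h. \<exists>t. (t,h)\<in>shs j B \<and> conc a (s+j) t}"
  then obtain t where "(t,h) \<in> shs j B" "conc a (s+j) t" by auto
  then obtain t0 where "(t0,h)\<in>B" "t = t0 + j" unfolding shs_def by auto
  then show "h \<in> {h. \<exists>t. (t,h)\<in>B \<and> conc a s t}" using \<open>conc a (s+j) t\<close> by auto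
next
  fix h assume "h \<in> {h. \<exists>t. (t,h)\<in>B \<and> conc a s t}"
  then obtain t where "(t,h) \<in> B" "conc a s t" by auto
  then have "(t+j,h) \<in> shs j B" "conc a (s+j) (t+j)" unfolding shs_def by force+
  then show "h \<in> {h. \<exists>t. (t,h)\<in>shs j B \<and> conc a (s+j) t}" by blast
qed
  moreover have "(\<exists>(t,h)\<in>shs j B. conc a (s+j) t) = (\<exists>(t,h)\<in>B. conc a s t)"
    unfolding shs_def by force
  ultimately show ?thesis unfolding drop_level_conc by simp
qed

lemma hpf_shift: "hpf a (shs j B) (map (\<lambda>x. x + j) ws) = shs j (hpf a B ws)"
proof (induction ws arbitrary: B)
  case (Cons x ws)
  have "stp a (shs j B) (x + j) = shs j (stp a B x)"
    unfolding stp_def dl_shift by (simp add: shs_def)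
  then show ?case using Cons by simp
qed simp

lemma shs_shs: "shs j (shs (-j) B) = B"
  unfolding shs_def image_image by (simp add: case_prod_beta)

lemma eqv_shift: "eqv a u v \<Longrightarrow> eqv a (map (\<lambda>x. x + j) u) (map (\<lambda>x. x + j) v)"
  unfolding eqv_def by (metis hpf_shift shs_shs)


definition maxpos :: "nat \<Rightarrow> (int \<times> nat) set \<Rightarrow> int set" where
  "maxpos a H = {x. \<exists>h. (x,h) \<in> H \<and> (\<forall>t h'. (t,h') \<in> H \<and> conc a x t \<longrightarrow> h' \<le> h)}"

definition Mf :: "nat \<Rightarrow> int set \<Rightarrow> int list \<Rightarrow> int set" where
  "Mf a S ws = foldl (\<lambda>S s. insert s {x\<in>S. \<not> conc a x s}) S ws"

lemma Mf_Nil[simp]: "Mf a S [] = S" by (simp add: Mf_def)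
lemma Mf_Cons[simp]: "Mf a S (s # ws) = Mf a (insert s {x\<in>S. \<not> conc a x s}) ws" by (simp add: Mf_def)

lemma Mf_split: "Mf a S v = {x\<in>S. \<forall>y\<in>set v. \<not> conc a x y} \<union> Mf a {} v"
proof (induction v arbitrary: S)
  case (Cons s v)
  have "Mf a {} (s # v) = {x\<in>{s}. \<forall>y\<in>set v. \<not> conc a x y} \<union> Mf a {} v"
    using Cons.IH[of "{s}"] by simp
  then show ?case using Cons.IH[of "insert s {x\<in>S. \<not> conc a x s}"] by auto
qed simp

lemma Mf_append: "Mf a {} (u @ v) = {x\<in>Mf a {} u. \<forall>y\<in>set v. \<not> conc a x y} \<union> Mf a {} v"
  by (simp add: Mf_def Mf_split[unfolded Mf_def, symmetric])

lemma Mf_snoc_in: "s \<in> Mf a {} (u @ [s])"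
  by (simp add: Mf_append)

lemma Mf_subset: "Mf a {} u \<subseteq> set u"
proof (induction u rule: rev_induct)
  case (snoc x xs) then show ?case by (auto simp: Mf_append)
qed simp

lemma Mf_shift: "Mf a {} (map (\<lambda>x. x + j) u) = (\<lambda>x. x + j) ` Mf a {} u"
proof (induction u rule: rev_induct)
  case (snoc x xs) then show ?case by (auto simp: Mf_append)
qed simp

lemma maxpos_stp: assumes "finite B" shows "maxpos a (stp a B s) = insert s {x\<in>maxpos a B. \<not> conc a x s}"
proof -
  let ?d = "drop_level a B s"
  show ?thesis
  proof (intro set_eqI iffI)
    fix y assume "y \<in> maxpos a (stp a B s)"
    then obtain h where yh: "(y,h) \<in> insert (s,?d) B" and mx: "\<forall>t h'. (t,h') \<in> insert (s,?d) B \<and> conc a y t \<longrightarrow> h' \<le> h"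
      unfolding maxpos_def stp_def by auto
    show "y \<in> insert s {x\<in>maxpos a B. \<not> conc a x s}"
    proof (cases "y = s")
      case False
      then have "(y,h) \<in> B" using yh by auto
      moreover have "\<not> conc a y s"
      proof
        assume "conc a y s"
        then have "?d \<le> h" using mx by auto
        moreover have "h < ?d" using dl_gt[OF assms \<open>(y,h)\<in>B\<close>] \<open>conc a y s\<close> conc_sym by metis
        ultimately show False by simp
      qed
      moreover have "\<forall>t h'. (t,h') \<in> B \<and> conc a y t \<longrightarrow> h' \<le> h" using mx by auto
      ultimately show ?thesis unfolding maxpos_def by auto
    qed simp
  next
    fix y assume y: "y \<in> insert s {x\<in>maxpos a B. \<not> conc a x s}"
    show "y \<in> maxpos a (stp a B s)"
    proof (cases "y = s")
      case True
      have "\<forall>t h'. (t,h') \<in> insert (s,?d) B \<and> conc a s t \<longrightarrow> h' \<le> ?d"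
        using dl_gt[OF assms] by fastforce
      then show ?thesis using True unfolding maxpos_def stp_def by auto
    next
      case False
      then obtain h where "(y,h)\<in>B" "\<forall>t h'. (t,h') \<in> B \<and> conc a y t \<longrightarrow> h' \<le> h" "\<not> conc a y s"
        using y unfolding maxpos_def by auto
      then show ?thesis unfolding maxpos_def stp_def by auto
    qed
  qed
qed

lemma maxpos_hpf: "finite B \<Longrightarrow> maxpos a (hpf a B ws) = Mf a (maxpos a B) ws"
proof (induction ws arbitrary: B)
  case (Cons x ws)
  have "finite (stp a B x)" using Cons.prems by (simp add: stp_def)
  then show ?case using Cons maxpos_stp[OF Cons.prems] by simp
qed simp

lemma maxpos_hp: "maxpos a (hpf a {} ws) = Mf a {} ws"
  using maxpos_hpf[of "{}"] by (simp add: maxpos_def)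

fun good :: "nat \<Rightarrow> int set \<Rightarrow> int list \<Rightarrow> bool" where
  "good a S [] = True"
| "good a S (x # xs) = ((\<exists>y\<in>S. conc a x y) \<and> good a (insert x S) xs)"

lemma good_append: "good a S (u @ v) = (good a S u \<and> good a (S \<union> set u) v)"
  by (induction u arbitrary: S) auto

lemma good_mono: "good a S u \<Longrightarrow> S \<subseteq> T \<Longrightarrow> good a T u"
proof (induction u arbitrary: S T)
  case (Cons x u)
  then have "good a (insert x T) u" by (meson good.simps(2) insert_mono)
  then show ?case using Cons.prems by auto
qed simp

lemma good_shift: "good a S u \<Longrightarrow> good a ((\<lambda>x. x + j) ` S) (map (\<lambda>x. x + j) u)"
proof (induction u arbitrary: S)
  case (Cons x u)
  have g: "good a (insert x S) u" using Cons.prems by simp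
  have 1: "good a ((\<lambda>x. x + j) ` insert x S) (map (\<lambda>x. x + j) u)" by (rule Cons.IH[OF g])
  obtain y where "y \<in> S" "conc a x y" using Cons.prems by auto
  then have 2: "\<exists>y\<in>(\<lambda>x. x + j) ` S. conc a (x + j) y" by force
  show ?case using 1 2 by simp
qed simp

lemma ground_hpf: "good a S xs \<Longrightarrow> S \<subseteq> fst ` B \<Longrightarrow> {p\<in>hpf a B xs. snd p = 0} = {p\<in>B. snd p = 0}"
proof (induction xs arbitrary: S B)
  case (Cons x xs)
  obtain y where y: "y \<in> S" "conc a x y" using Cons.prems by auto
  then obtain h where "(y,h) \<in> B" using Cons.prems by force
  then have pos: "drop_level a B x > 0" using dl_pos y by metis
  have "{p\<in>hpf a (stp a B x) xs. snd p = 0} = {p\<in>stp a B x. snd p = 0}"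
    using Cons.IH[of "insert x S" "stp a B x"] Cons.prems by (auto simp: stp_def)
  also have "\<dots> = {p\<in>B. snd p = 0}" using pos by (auto simp: stp_def)
  finally show ?case by simp
qed simp

lemma peel: assumes "heap a H" "a > 0" "(s,d) \<in> H" "\<forall>(t,h)\<in>H. conc a s t \<longrightarrow> h \<le> d"
  shows "heap a (H - {(s,d)}) \<and> drop_level a (H - {(s,d)}) s = d"
  using assms
proof (induction arbitrary: s d rule: heap.induct)
  case heap_empty then show ?case by simp
next
  case (heap_drop H0 t)
  let ?e = "drop_level a H0 t"
  have fin: "finite H0" using heap_drop.hyps heap_finite by blast
  have nin: "(t,?e) \<notin> H0" using new_notin[OF \<open>a>0\<close> fin] .
  show ?case
  proof (cases "(s,d) = (t,?e)")
    case True
    then have "insert (t, ?e) H0 - {(s,d)} = H0" using nin by auto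
    then show ?thesis using True heap_drop.hyps by auto
  next
    case False
    then have sd: "(s,d) \<in> H0" using heap_drop.prems by auto
    have nc: "\<not> conc a s t"
    proof
      assume c: "conc a s t"
      then have "?e \<le> d" using heap_drop.prems by auto
      moreover have "d < ?e" using dl_gt[OF fin sd] c conc_sym by metis
      ultimately show False by simp
    qed
    have IH: "heap a (H0 - {(s,d)}) \<and> drop_level a (H0 - {(s,d)}) s = d"
      using heap_drop.IH[OF \<open>a>0\<close> sd] heap_drop.prems by auto
    have nc': "\<not> conc a t s" using nc conc_sym by metis
    have eq: "insert (t, ?e) H0 - {(s,d)} = insert (t, ?e) (H0 - {(s,d)})" using False by auto
    have e: "drop_level a (H0 - {(s,d)}) t = ?e"
    proof -
      have "H0 = insert (s,d) (H0 - {(s,d)})" using sd by auto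
      then have "?e = drop_level a (insert (s,d) (H0 - {(s,d)})) t" by simp
      also have "\<dots> = drop_level a (H0 - {(s,d)}) t" by (rule dl_insert[OF nc'])
      finally show ?thesis by simp
    qed
    have "heap a (insert (t, ?e) (H0 - {(s,d)}))"
      using heap.heap_drop[OF conjunct1[OF IH], of t] e by simp
    moreover have "drop_level a (insert (t, ?e) (H0 - {(s,d)})) s = d"
      using dl_insert[OF nc] IH by simp
    ultimately show ?thesis using eq by simp
  qed
qed


lemma set_wl: "z \<in> set (wl j cs) \<longleftrightarrow> (\<exists>k<length cs. z - (j + int k) \<in> set (w (cs!k)))"
proof (induction cs arbitrary: j)
  case (Cons c cs)
  have "z \<in> set (wl j (c # cs)) \<longleftrightarrow> (\<exists>k<length cs. z - (j + 1 + int k) \<in> set (w (cs!k))) \<or> z - j \<in> set (w c)"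
  proof -
    have e: "z \<in> (\<lambda>x. x + j) ` A \<longleftrightarrow> z - j \<in> A" for A by force
    show ?thesis using Cons.IH[of "j+1"] e by simp
  qed
  also have "\<dots> \<longleftrightarrow> (\<exists>k<length (c#cs). z - (j + int k) \<in> set (w ((c#cs)!k)))"
  proof
    assume "(\<exists>k<length cs. z - (j + 1 + int k) \<in> set (w (cs!k))) \<or> z - j \<in> set (w c)"
    then show "\<exists>k<length (c#cs). z - (j + int k) \<in> set (w ((c#cs)!k))"
    proof
      assume "\<exists>k<length cs. z - (j + 1 + int k) \<in> set (w (cs!k))"
      then obtain k where "k < length cs" "z - (j + 1 + int k) \<in> set (w (cs!k))" by auto
      then show ?thesis by (intro exI[of _ "Suc k"]) (auto simp: add.assoc)
    next
      assume "z - j \<in> set (w c)" then show ?thesis by (intro exI[of _ 0]) auto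
    qed
  next
    assume "\<exists>k<length (c#cs). z - (j + int k) \<in> set (w ((c#cs)!k))"
    then obtain k where k: "k < length (c#cs)" "z - (j + int k) \<in> set (w ((c#cs)!k))" by auto
    show "(\<exists>k<length cs. z - (j + 1 + int k) \<in> set (w (cs!k))) \<or> z - j \<in> set (w c)"
    proof (cases k)
      case 0 then show ?thesis using k by auto
    next
      case (Suc k') then show ?thesis using k by (intro disjI1 exI[of _ k']) (auto simp: add.assoc)
    qed
  qed
  finally show ?case .
qed simp

lemma w_nonneg: "z \<in> set (w c) \<Longrightarrow> 0 \<le> z"
proof (induction c arbitrary: z rule: ptree.induct)
  case (PT cs)
  show ?case
  proof (cases "z = 0")
    case False
    then have "z \<in> set (wl 0 cs)" using PT.prems by (auto split: if_splits)
    then obtain k where "k < length cs" "z - int k \<in> set (w (cs!k))" by (auto simp: set_wl)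
    then show ?thesis using PT.IH[of "cs!k" "z - int k"] by auto
  qed simp
qed

lemma wl_ge: "z \<in> set (wl j cs) \<Longrightarrow> j \<le> z"
  using w_nonneg by (fastforce simp: set_wl)

lemma wl_leaves: "list_all (\<lambda>c. c = PT []) cs \<Longrightarrow> wl j cs = []"
  by (induction cs arbitrary: j) auto

lemma length_wl: "length (wl j cs) = sum_list (map (\<lambda>c. length (w c)) cs)"
  by (induction cs arbitrary: j) auto

lemma length_w: "a > 0 \<Longrightarrow> nonroot_ok a c \<Longrightarrow> length (w c) = nonroot_nodes a c"
proof (induction c rule: ptree.induct)
  case (PT cs)
  have "sum_list (map (\<lambda>c. length (w c)) cs) = sum_list (map (nonroot_nodes a) cs)"
    using PT by (intro arg_cong[where f = sum_list] map_cong) (auto simp: list_all_iff)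
  then show ?case using PT.prems by (auto simp: length_wl)
qed

lemma w_nil_iff: "w c = [] \<longleftrightarrow> c = PT []"
  by (cases c) auto

lemma length_rl: "length (rl cs) = length cs"
  by (induction cs) auto

lemma rl_nonleaf: "\<not> list_all (\<lambda>c. c = PT []) cs \<Longrightarrow> rl cs \<noteq> []"
  by (cases cs) auto

lemma valid_r: "nonroot_ok a c \<Longrightarrow> nonroot_ok a (r c)"
proof (induction c rule: ptree.induct)
  case (PT cs)
  have "list_all (nonroot_ok a) cs \<Longrightarrow> (\<forall>c\<in>set cs. nonroot_ok a c \<longrightarrow> nonroot_ok a (r c))
    \<Longrightarrow> list_all (nonroot_ok a) (rl cs)" for cs
    by (induction cs) auto
  then show ?case using PT by (auto simp: length_rl list_all_iff)
qed

lemma wl_split: "\<not> list_all (\<lambda>c. c = PT []) cs \<Longrightarrow>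
  (\<forall>c\<in>set cs. c \<noteq> PT [] \<longrightarrow> w c = w (r c) @ [lp c]) \<Longrightarrow> wl j cs = wl j (rl cs) @ [ll j cs]"
proof (induction cs arbitrary: j)
  case (Cons c cs)
  show ?case
  proof (cases "c = PT []")
    case True then show ?thesis using Cons by auto
  next
    case False then show ?thesis using Cons.prems by auto
  qed
qed simp

lemma w_split: "c \<noteq> PT [] \<Longrightarrow> w c = w (r c) @ [lp c]"
proof (induction c rule: ptree.induct)
  case (PT cs)
  show ?case
  proof (cases "list_all (\<lambda>c. c = PT []) cs")
    case True then show ?thesis using PT.prems by (simp add: wl_leaves)
  next
    case False
    then have "wl 0 cs = wl 0 (rl cs) @ [ll 0 cs]" using PT.IH by (intro wl_split) auto
    moreover have "cs \<noteq> []" using False by (cases cs) auto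
    ultimately show ?thesis using False rl_nonleaf[OF False] by simp
  qed
qed

lemma conn: "nonroot_ok a c \<Longrightarrow> z \<in> set (w c) \<Longrightarrow> 0 \<le> p \<Longrightarrow> p \<le> z \<Longrightarrow> \<exists>y\<in>set (w c). conc a p y"
proof (induction c arbitrary: z p rule: ptree.induct)
  case (PT cs)
  have cs: "cs \<noteq> []" using PT.prems by auto
  show ?case
  proof (cases "p < int a")
    case True then show ?thesis using cs PT.prems by (intro bexI[of _ 0]) (auto simp: conc_def)
  next
    case False
    have la0: "int a > 0" using PT.prems cs by auto
    have "z \<noteq> 0"
    proof
      assume "z = 0" then have "p < int a" using la0 PT.prems by linarith
      then show False using False by simp
    qed
    then have "z \<in> set (wl 0 cs)" using PT.prems by (auto split: if_splits)
    then obtain k where k: "k < length cs" "z - int k \<in> set (w (cs!k))" by (auto simp: set_wl)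
    have la: "length cs = a" using PT.prems cs by auto
    have v: "nonroot_ok a (cs!k)" using PT.prems k by (auto simp: list_all_iff)
    obtain y where y: "y \<in> set (w (cs!k))" "conc a (p - int k) y"
      using PT.IH[OF _ v k(2), of "p - int k"] k la False PT.prems by auto
    have "y + int k \<in> set (wl 0 cs)" using y k by (auto simp: set_wl)
    moreover have "conc a p (y + int k)" using y(2) conc_shift[of a "p - int k" "int k" y] by simp
    ultimately show ?thesis using cs by auto
  qed
qed


lemma lp_in: "c \<noteq> PT [] \<Longrightarrow> lp c \<in> set (w c)"
  using w_split[of c] by (metis in_set_conv_decomp)

lemma lp_nonneg: "0 \<le> lp c"
  by (cases "c = PT []") (auto intro: w_nonneg lp_in)

lemma ll_ge: "\<not> list_all (\<lambda>c. c = PT []) cs \<Longrightarrow> j \<le> ll j cs"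
proof -
  assume n: "\<not> list_all (\<lambda>c. c = PT []) cs"
  have "wl j cs = wl j (rl cs) @ [ll j cs]" using n w_split by (intro wl_split) auto
  then have "ll j cs \<in> set (wl j cs)" by (metis in_set_conv_decomp)
  then show ?thesis by (rule wl_ge)
qed

lemma lastmin_inner: "\<not> list_all (\<lambda>c. c = PT []) cs \<Longrightarrow>
  (\<forall>c\<in>set cs. c \<noteq> PT [] \<longrightarrow> nonroot_ok a c \<longrightarrow> (\<forall>x\<in>Mf a {} (w c). lp c \<le> x)) \<Longrightarrow>
  list_all (nonroot_ok a) cs \<Longrightarrow> x \<in> Mf a {} (wl j cs) \<Longrightarrow> ll j cs \<le> x"
proof (induction cs arbitrary: j)
  case (Cons c cs)
  show ?case
  proof (cases "c = PT []")
    case True then show ?thesis using Cons by auto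
  next
    case False
    let ?M = "map (\<lambda>x. x + j) (w c)"
    have x: "x \<in> {x\<in>Mf a {} (wl (j+1) cs). \<forall>y\<in>set ?M. \<not> conc a x y} \<union> (\<lambda>x. x + j) ` Mf a {} (w c)"
      using Cons.prems(4) by (simp add: Mf_append Mf_shift)
    have vc: "nonroot_ok a c" using Cons.prems by auto
    show ?thesis
    proof (cases "x \<in> (\<lambda>x. x + j) ` Mf a {} (w c)")
      case True
      then obtain x0 where "x = x0 + j" "x0 \<in> Mf a {} (w c)" by auto
      then show ?thesis using Cons.prems(2) False vc by auto
    next
      case xn: False
      then have x1: "x \<in> set (wl (j+1) cs)" "\<forall>y\<in>set ?M. \<not> conc a x y"
        using x Mf_subset by auto
      have "j + 1 \<le> x" using wl_ge[OF x1(1)] .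
      show ?thesis
      proof (rule ccontr)
        assume "\<not> ll j (c # cs) \<le> x"
        then have "x - j \<le> lp c" using False by simp
        then obtain y where y: "y \<in> set (w c)" "conc a (x - j) y"
          using conn[OF vc lp_in[OF False], of "x - j"] \<open>j + 1 \<le> x\<close> by auto
        then have "y + j \<in> set ?M" "conc a x (y + j)" using conc_shift[of a "x - j" j y] by auto
        then show False using x1(2) by blast
      qed
    qed
  qed
qed simp

lemma lastmin: "nonroot_ok a c \<Longrightarrow> c \<noteq> PT [] \<Longrightarrow> x \<in> Mf a {} (w c) \<Longrightarrow> lp c \<le> x"
proof (induction c arbitrary: x rule: ptree.induct)
  case (PT cs)
  have cs: "cs \<noteq> []" using PT.prems by auto
  show ?case
  proof (cases "list_all (\<lambda>c. c = PT []) cs")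
    case True then show ?thesis using PT.prems by (simp add: wl_leaves)
  next
    case False
    have "x \<in> {x\<in>Mf a {} [0]. \<forall>y\<in>set (wl 0 cs). \<not> conc a x y} \<union> Mf a {} (wl 0 cs)"
      using PT.prems cs Mf_append[of a "[0]" "wl 0 cs"] by simp
    moreover have "\<exists>y\<in>set (wl 0 cs). conc a 0 y"
    proof -
      obtain c where c: "c \<in> set cs" "c \<noteq> PT []" using False by (auto simp: list_all_iff)
      then obtain k where k: "k < length cs" "cs ! k = c" by (meson in_set_conv_nth)
      have "0 \<in> set (w c)" using c(2) by (cases c) auto
      then have "int k \<in> set (wl 0 cs)" using k by (auto simp: set_wl)
      moreover have "length cs = a" using PT.prems cs by auto
      ultimately show ?thesis using k by (intro bexI[of _ "int k"]) (auto simp: conc_def)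
    qed
    ultimately have "x \<in> Mf a {} (wl 0 cs)" by auto
    then have "ll 0 cs \<le> x" using PT.prems PT.IH False
      by (intro lastmin_inner) auto
    then show ?thesis using False by simp
  qed
qed

lemma r_leaf_lp: "d \<noteq> PT [] \<Longrightarrow> r d = PT [] \<Longrightarrow> lp d = 0"
proof (cases d)
  case (PT es)
  assume "d \<noteq> PT []" "r d = PT []"
  then show ?thesis using PT rl_nonleaf[of es] by (auto split: if_splits)
qed

lemma det: "nonroot_ok a c1 \<Longrightarrow> nonroot_ok a c2 \<Longrightarrow> c1 \<noteq> PT [] \<Longrightarrow> c2 \<noteq> PT [] \<Longrightarrow>
  r c1 = r c2 \<Longrightarrow> lp c1 = lp c2 \<Longrightarrow> c1 = c2"
proof (induction c1 arbitrary: c2 rule: ptree.induct)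
  case (PT cs)
  obtain ds where c2: "c2 = PT ds" by (cases c2)
  have cs: "cs \<noteq> []" "length cs = a" using PT.prems by auto
  have ds: "ds \<noteq> []" "length ds = a" using PT.prems c2 by auto
  show ?case
  proof (cases "list_all (\<lambda>c. c = PT []) cs")
    case True
    have "list_all (\<lambda>c. c = PT []) ds"
    proof (rule ccontr)
      assume "\<not> ?thesis"
      then show False using True PT.prems(5) c2 rl_nonleaf[of ds] by (auto split: if_splits)
    qed
    then have "ds = replicate a (PT [])" "cs = replicate a (PT [])" using True cs ds
      by (metis (mono_tags, lifting) list.pred_set replicate_length_same)+
    then show ?thesis using c2 by simp
  next
    case False
    have Fd: "\<not> list_all (\<lambda>c. c = PT []) ds"
    proof
      assume "list_all (\<lambda>c. c = PT []) ds"
      then show False using False PT.prems(5) c2 rl_nonleaf by (auto split: if_splits)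
    qed
    have eqs: "rl cs = rl ds" "ll 0 cs = ll 0 ds" using PT.prems(5,6) False Fd c2 by auto
    have inner: "\<And>ds j. \<not> list_all (\<lambda>c. c = PT []) cs' \<Longrightarrow> \<not> list_all (\<lambda>c. c = PT []) ds \<Longrightarrow>
       list_all (nonroot_ok a) cs' \<Longrightarrow> list_all (nonroot_ok a) ds \<Longrightarrow> set cs' \<subseteq> set cs \<Longrightarrow>
       rl cs' = rl ds \<Longrightarrow> ll j cs' = ll j ds \<Longrightarrow> cs' = ds" for cs'
    proof (induction cs')
      case Nil then show ?case by simp
    next
      case (Cons c cs')
      from Cons.prems(6) obtain d ds' where ds: "ds = d # ds'" by (cases ds) (auto split: if_splits)
      show ?case
      proof (cases "c = PT []"; cases "d = PT []")
        assume "c = PT []" "d = PT []"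
        then show ?thesis using Cons ds by auto
      next
        assume h: "c = PT []" "d \<noteq> PT []"
        then have "r d = PT []" "ll (j+1) cs' = j + lp d" using Cons.prems(6,7) ds by auto
        moreover have "j + 1 \<le> ll (j+1) cs'" using Cons.prems(1) h by (intro ll_ge) auto
        ultimately show ?thesis using r_leaf_lp[OF h(2)] by simp
      next
        assume h: "c \<noteq> PT []" "d = PT []"
        then have "r c = PT []" "ll (j+1) ds' = j + lp c" using Cons.prems(6,7) ds by auto
        moreover have "j + 1 \<le> ll (j+1) ds'" using Cons.prems(2) h ds by (intro ll_ge) auto
        ultimately show ?thesis using r_leaf_lp[OF h(1)] by simp
      next
        assume h: "c \<noteq> PT []" "d \<noteq> PT []"
        then have "r c = r d" "cs' = ds'" "lp c = lp d" using Cons.prems(6,7) ds by auto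
        moreover have "c = d" using PT.IH[of c d] Cons.prems h ds \<open>r c = r d\<close> \<open>lp c = lp d\<close> by auto
        ultimately show ?thesis using ds by simp
      qed
    qed
    have va: "list_all (nonroot_ok a) cs" "list_all (nonroot_ok a) ds" using PT.prems c2 by auto
    have "cs = ds" by (rule inner[OF False Fd va subset_refl eqs])
    then show ?thesis using c2 by simp
  qed
qed


abbreviation leafn :: "nat \<Rightarrow> ptree" where "leafn a \<equiv> PT (replicate a (PT []))"

lemma w_leafn: "a > 0 \<Longrightarrow> w (leafn a) = [0]"
  by (simp add: wl_leaves list_all_iff)

lemma valid_leafn: "nonroot_ok a (leafn a)"
  by (simp add: list_all_iff)

lemma good_w: "a > 0 \<Longrightarrow> nonroot_ok a c \<Longrightarrow> good a {0} (tl (w c))"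
proof (induction c rule: ptree.induct)
  case (PT cs)
  have GI: "\<And>j B. 0 \<in> B \<Longrightarrow> 0 \<le> j \<Longrightarrow> j + int (length cs') \<le> int a \<Longrightarrow> set cs' \<subseteq> set cs \<Longrightarrow>
     good a B (wl j cs')" for cs'
  proof (induction cs')
    case Nil then show ?case by simp
  next
    case (Cons c rest)
    have g1: "good a B (wl (j+1) rest)" using Cons by auto
    have "good a (B \<union> set (wl (j+1) rest)) (map (\<lambda>x. x + j) (w c))"
    proof (cases "c = PT []")
      case False
      have vc: "nonroot_ok a c" using PT.prems Cons.prems by (auto simp: list_all_iff)
      have wc: "w c = 0 # tl (w c)" using False by (cases c) auto
      have "good a {0} (tl (w c))" using PT.IH[of c] Cons.prems vc PT.prems by auto
      then have "good a ((\<lambda>x. x + j) ` {0}) (map (\<lambda>x. x + j) (tl (w c)))"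
        by (rule good_shift)
      then have "good a (insert j (B \<union> set (wl (j+1) rest))) (map (\<lambda>x. x + j) (tl (w c)))"
        by (rule good_mono) auto
      moreover have "conc a j 0" using Cons.prems by (auto simp: conc_def)
      ultimately show ?thesis using Cons.prems by (subst wc) auto
    qed simp
    then show ?case using g1 by (simp add: good_append)
  qed
  show ?case
  proof (cases "cs = []")
    case False
    then have "length cs = a" using PT.prems by auto
    have "good a {0} (wl 0 cs)" by (rule GI) (use \<open>length cs = a\<close> in auto)
    then show ?thesis using False by simp
  qed simp
qed

lemma grow: "a > 0 \<Longrightarrow> nonroot_ok a c \<Longrightarrow> 0 \<le> s \<Longrightarrow> (c = PT [] \<and> s = 0) \<or> (\<exists>y\<in>set (w c). conc a s y)
   \<Longrightarrow> \<exists>c'. nonroot_ok a c' \<and> eqv a (w c') (w c @ [s])"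
proof (induction c arbitrary: s rule: ptree.induct)
  case (PT cs)
  show ?case
  proof (cases "cs = []")
    case True
    then have "s = 0" using PT.prems by auto
    have w0: "w (PT []) = []" by simp
    have e: "w (leafn a) = w (PT cs) @ [s]"
      by (simp only: w_leafn[OF PT.prems(1)] True \<open>s = 0\<close> w0 append_Nil)
    show ?thesis using valid_leafn[of a] eqv_refl[of a "w (leafn a)"] e by metis
  next
    case False
    have la: "length cs = a" using PT.prems False by auto
    have GL: "\<And>j s. list_all (nonroot_ok a) cs' \<Longrightarrow> set cs' \<subseteq> set cs \<Longrightarrow> j \<le> s \<Longrightarrow>
       s < j + int (length cs') \<or> (\<exists>y\<in>set (wl j cs'). conc a s y) \<Longrightarrow>
       \<exists>cs''. length cs'' = length cs' \<and> list_all (nonroot_ok a) cs'' \<and> eqv a (wl j cs'') (wl j cs' @ [s])" for cs'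
    proof (induction cs')
      case Nil then show ?case by simp
    next
      case (Cons c rest)
      let ?M = "map (\<lambda>x. x + j) (w c)"
      have vc: "nonroot_ok a c" using Cons.prems by simp
      show ?case
      proof (cases "s = j \<and> c = PT []")
        case True
        have "wl j (leafn a # rest) = wl j (c # rest) @ [s]" using True w_leafn[OF \<open>a > 0\<close>] by simp
        then show ?thesis using Cons.prems valid_leafn eqv_refl
          by (intro exI[of _ "leafn a # rest"]) auto
      next
        case nT: False
        show ?thesis
        proof (cases "\<exists>y\<in>set (w c). conc a (s - j) y")
          case True
          have cin: "c \<in> set cs" using Cons.prems by auto
          have sj: "0 \<le> s - j" using Cons.prems by simp
          obtain c'' where c'': "nonroot_ok a c''" "eqv a (w c'') (w c @ [s - j])"
            using PT.IH[OF cin \<open>a > 0\<close> vc sj] True by blast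
          have "eqv a (map (\<lambda>x. x + j) (w c'')) (map (\<lambda>x. x + j) (w c @ [s - j]))"
            by (rule eqv_shift[OF c''(2)])
          then have "eqv a (wl (j+1) rest @ map (\<lambda>x. x + j) (w c'')) (wl (j+1) rest @ (?M @ [s]))"
            by (intro eqv_app eqv_refl) simp
          then show ?thesis using c'' Cons.prems by (intro exI[of _ "c'' # rest"]) auto
        next
          case False
          have nc: "\<forall>y\<in>set ?M. \<not> conc a s y"
          proof
            fix y assume "y \<in> set ?M"
            then obtain y0 where "y0 \<in> set (w c)" "y = y0 + j" by auto
            then show "\<not> conc a s y" using False conc_shift[of a "s - j" j y0] by auto
          qed
          have "s \<noteq> j"
          proof
            assume "s = j"
            then have "c \<noteq> PT []" using nT by simp
            then have "0 \<in> set (w c)" by (cases c) auto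
            then show False using False \<open>s = j\<close> conc_refl[OF \<open>a > 0\<close>] by auto
          qed
          then have "j + 1 \<le> s" using Cons.prems by simp
          moreover have "s < j + 1 + int (length rest) \<or> (\<exists>y\<in>set (wl (j+1) rest). conc a s y)"
            using Cons.prems(4) nc by auto
          moreover have "list_all (nonroot_ok a) rest" "set rest \<subseteq> set cs" using Cons.prems by auto
          ultimately obtain rest' where r': "length rest' = length rest" "list_all (nonroot_ok a) rest'"
              "eqv a (wl (j+1) rest') (wl (j+1) rest @ [s])"
            using Cons.IH by blast
          have "eqv a (wl (j+1) rest' @ ?M) ((wl (j+1) rest @ [s]) @ ?M)"
            by (intro eqv_app eqv_refl r'(3))
          moreover have "eqv a (wl (j+1) rest @ ([s] @ ?M)) (wl (j+1) rest @ (?M @ [s]))"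
            using eqv_app[OF eqv_refl[of a "wl (j+1) rest"] eqv_sym[OF eqv_commute[OF nc]]] by simp
          ultimately have "eqv a (wl j (c # rest')) (wl j (c # rest) @ [s])"
            by (auto intro: eqv_trans)
          then show ?thesis using r' vc by (intro exI[of _ "c # rest'"]) auto
        qed
      qed
    qed
    have disj: "s < 0 + int (length cs) \<or> (\<exists>y\<in>set (wl 0 cs). conc a s y)"
    proof -
      obtain y where y: "y \<in> set (0 # wl 0 cs)" "conc a s y" using PT.prems(4) False by auto
      then show ?thesis by (cases "y = 0") (auto simp: conc_def la)
    qed
    have "\<exists>cs''. length cs'' = length cs \<and> list_all (nonroot_ok a) cs'' \<and> eqv a (wl 0 cs'') (wl 0 cs @ [s])"
      by (rule GL) (use PT.prems disj in auto)
    then obtain cs'' where cs'': "length cs'' = length cs" "list_all (nonroot_ok a) cs''"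
       "eqv a (wl 0 cs'') (wl 0 cs @ [s])" by blast
    have "eqv a ([0] @ wl 0 cs'') ([0] @ (wl 0 cs @ [s]))" by (intro eqv_app eqv_refl cs''(3))
    moreover have "cs'' \<noteq> []" using cs'' False by auto
    ultimately have "eqv a (w (PT cs'')) (w (PT cs) @ [s])" using False by simp
    moreover have "nonroot_ok a (PT cs'')" using cs'' la by simp
    ultimately show ?thesis by blast
  qed
qed


lemma last_eq: assumes "a > 0" "finite B1" "finite B2" "stp a B1 s = stp a B2 s" shows "B1 = B2"
proof -
  let ?d1 = "drop_level a B1 s"
  let ?d2 = "drop_level a B2 s"
  have n1: "(s,?d1) \<notin> B1" and n2: "(s,?d2) \<notin> B2" using new_notin assms by auto
  have l1: "\<And>h. (s,h) \<in> B1 \<Longrightarrow> h < ?d1" using dl_gt[OF assms(2)] conc_refl[OF assms(1)] by blast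
  have l2: "\<And>h. (s,h) \<in> B2 \<Longrightarrow> h < ?d2" using dl_gt[OF assms(3)] conc_refl[OF assms(1)] by blast
  have e: "insert (s,?d1) B1 = insert (s,?d2) B2" using assms(4) unfolding stp_def .
  have "?d1 = ?d2"
  proof (rule ccontr)
    assume ne: "?d1 \<noteq> ?d2"
    have "(s,?d2) \<in> B1" using e ne by (metis insert_iff insertI1 prod.inject)
    moreover have "(s,?d1) \<in> B2" using e ne by (metis insert_iff insertI1 prod.inject)
    ultimately show False using l1 l2 by fastforce
  qed
  then show ?thesis using e n1 n2 by (metis insert_ident)
qed

lemma pyr: assumes "a > 0" "nonroot_ok a c" "c \<noteq> PT []"
  shows "right_zero_pyramid a (hpf a {} (w c)) \<and> card (hpf a {} (w c)) = nonroot_nodes a c"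
proof -
  have wc: "w c = 0 # tl (w c)" using assms(3) by (cases c) auto
  have s0: "stp a {} 0 = {(0,0)}" by (simp add: stp_def drop_level_conc)
  have H: "hpf a {} (w c) = hpf a {(0,0)} (tl (w c))"
    by (subst wc) (simp only: hpf_Cons s0)
  have heap: "heap a (hpf a {} (w c))" by (rule heap_hpf[OF heap.heap_empty])
  have card: "card (hpf a {} (w c)) = nonroot_nodes a c"
    using card_hpf[OF assms(1), of "{}" "w c"] length_w[OF assms(1,2)] by simp
  have in00: "(0,0) \<in> hpf a {} (w c)" using H hpf_mono by blast
  have nn: "\<forall>(t,h)\<in>hpf a {} (w c). \<not> t < 0"
  proof (clarify)
    fix t h assume "(t,h) \<in> hpf a {} (w c)" "t < 0"
    then have "t \<in> fst ` hpf a {} (w c)" by force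
    then have "t \<in> set (w c)" by (simp add: fst_hpf)
    then show False using w_nonneg \<open>t < 0\<close> by fastforce
  qed
  have ground: "{p \<in> hpf a {} (w c). snd p = 0} = {(0,0)}"
    using ground_hpf[OF good_w[OF assms(1,2)], of "{(0,0)}"] H by auto
  show ?thesis unfolding right_zero_pyramid_def pyramid_def using heap card in00 nn ground by simp
qed

lemma surj: assumes "a > 0" "right_zero_pyramid a H" shows "\<exists>c. nonroot_ok a c \<and> hpf a {} (w c) = H"
  using assms(2)
proof (induction "card H" arbitrary: H rule: less_induct)
  case less
  have heap: "heap a H" and g1: "card {p\<in>H. snd p = 0} = 1" and z: "(0,0)\<in>H" and nn: "\<forall>(t,h)\<in>H. \<not> t<0"
    using less.prems unfolding right_zero_pyramid_def pyramid_def by auto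
  have fin: "finite H" by (rule heap_finite[OF heap])
  define d where "d = Max (snd ` H)"
  have "d \<in> snd ` H" using fin z unfolding d_def by (intro Max_in) auto
  then obtain s where sd: "(s,d) \<in> H" by auto
  have dmax: "\<forall>(t,h)\<in>H. h \<le> d"
  proof clarify
    fix t h assume "(t,h) \<in> H"
    then have "h \<in> snd ` H" by force
    then show "h \<le> d" unfolding d_def using fin by simp
  qed
  show ?case
  proof (cases "d = 0")
    case True
    then have "{p\<in>H. snd p = 0} = H" using dmax by auto
    then have "card H = 1" using g1 by simp
    then have HH: "H = {(0,0)}" using z by (metis card_1_singletonE singletonD)
    have wl1: "w (leafn a) = [0]" by (rule w_leafn[OF assms(1)])
    have "hpf a {} (w (leafn a)) = {(0,0)}"
      by (simp only: wl1 hpf_Cons hpf_Nil) (simp add: stp_def drop_level_conc)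
    then show ?thesis using HH valid_leafn by blast
  next
    case False
    let ?H' = "H - {(s,d)}"
    have pe: "heap a ?H' \<and> drop_level a ?H' s = d" using peel[OF heap assms(1) sd] dmax by auto
    have gr: "{p\<in>?H'. snd p = 0} = {p\<in>H. snd p = 0}" using False by auto
    have "(0,0) \<in> ?H'" using z False by auto
    then have rz: "right_zero_pyramid a ?H'" using pe gr g1 nn unfolding right_zero_pyramid_def pyramid_def by auto
    have "card ?H' < card H" using fin sd by (rule card_Diff1_less)
    then obtain c where c: "nonroot_ok a c" "hpf a {} (w c) = ?H'" using less.hyps rz by blast
    have "stp a ?H' s = insert (s,d) ?H'" using pe by (simp add: stp_def)
    also have "\<dots> = H" using sd by auto
    finally have Heq: "hpf a {} (w c @ [s]) = H" using c(2) by (simp add: hpf_snoc)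
    have s0: "0 \<le> s" using nn sd by auto
    have "drop_level a ?H' s > 0" using pe False by simp
    then obtain t h where th: "(t,h) \<in> ?H'" "conc a s t" using dl_zero by blast
    then have "t \<in> fst ` hpf a {} (w c)" using c(2) by force
    then have "t \<in> set (w c)" by (simp add: fst_hpf)
    then obtain c' where c': "nonroot_ok a c'" "eqv a (w c') (w c @ [s])"
      using grow[OF assms(1) c(1) s0] th(2) by blast
    then have "hpf a {} (w c') = H" using Heq unfolding eqv_def by simp
    then show ?thesis using c' by blast
  qed
qed

lemma inj: assumes "a > 0"
  shows "nonroot_ok a c1 \<Longrightarrow> nonroot_ok a c2 \<Longrightarrow> hpf a {} (w c1) = hpf a {} (w c2) \<Longrightarrow> c1 = c2"
proof (induction "length (w c1)" arbitrary: c1 c2 rule: less_induct)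
  case less
  show ?case
  proof (cases "c1 = PT []")
    case True
    then have "hpf a {} (w c2) = {}" using less.prems by simp
    then have "set (w c2) = {}" using fst_hpf[of a "{}" "w c2"] by simp
    then show ?thesis using True w_nil_iff by auto
  next
    case False
    have F2: "c2 \<noteq> PT []"
    proof
      assume "c2 = PT []"
      then have "set (w c1) = {}" using less.prems fst_hpf[of a "{}" "w c1"] by simp
      then show False using False w_nil_iff by auto
    qed
    have M: "Mf a {} (w c1) = Mf a {} (w c2)" using less.prems(3) maxpos_hp by metis
    have s1: "lp c1 \<in> Mf a {} (w c1)" using w_split[OF False] Mf_snoc_in by metis
    have s2: "lp c2 \<in> Mf a {} (w c2)" using w_split[OF F2] Mf_snoc_in by metis
    have "lp c2 \<le> lp c1" using lastmin[OF less.prems(2) F2] s1 M by auto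
    moreover have "lp c1 \<le> lp c2" using lastmin[OF less.prems(1) False] s2 M by auto
    ultimately have lpe: "lp c1 = lp c2" by simp
    have "stp a (hpf a {} (w (r c1))) (lp c1) = stp a (hpf a {} (w (r c2))) (lp c2)"
      using less.prems(3) w_split[OF False] w_split[OF F2] by (metis hpf_snoc)
    then have "hpf a {} (w (r c1)) = hpf a {} (w (r c2))"
      using last_eq[OF assms finite_hpf finite_hpf] lpe by simp
    moreover have "length (w (r c1)) < length (w c1)" using w_split[OF False] by (metis length_append_singleton lessI)
    ultimately have "r c1 = r c2" using less.hyps valid_r less.prems by blast
    then show ?thesis using det[OF less.prems(1,2) False F2 _ lpe] by simp
  qed
qed

theorem proposition2:
  fixes a m :: nat
  assumes "a \<ge> 3" and "m \<ge> 1"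
  shows "\<exists>f. bij_betw f {H. right_zero_pyramid a H \<and> card H = m}
                        {t. nary_tree a t \<and> num_nodes a t = m}"
proof -
  have a0: "a > 0" using assms by simp
  let ?T = "{t. nary_tree a t \<and> num_nodes a t = m}"
  let ?P = "{H. right_zero_pyramid a H \<and> card H = m}"
  define g where "g t = hpf a {} (w (hd (children t)))" for t
  have Tchar: "t \<in> ?T \<longleftrightarrow> (\<exists>c. t = PT [c] \<and> nonroot_ok a c \<and> nonroot_nodes a c = m)" for t
  proof
    assume t: "t \<in> ?T"
    obtain cs where cs: "t = PT cs" by (cases t)
    then have "length cs = 1" using t by (simp add: nary_tree_def)
    then obtain c where "cs = [c]" by (metis One_nat_def length_0_conv length_Suc_conv)
    then show "\<exists>c. t = PT [c] \<and> nonroot_ok a c \<and> nonroot_nodes a c = m"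
      using t cs assms(1) by (auto simp: nary_tree_def num_nodes_def)
  next
    assume "\<exists>c. t = PT [c] \<and> nonroot_ok a c \<and> nonroot_nodes a c = m"
    then show "t \<in> ?T" using assms(1) by (auto simp: nary_tree_def num_nodes_def)
  qed
  have nl: "c \<noteq> PT []" if "nonroot_nodes a c = m" for c
    using that assms by auto
  have "inj_on g ?T"
  proof (rule inj_onI)
    fix t1 t2 assume t12: "t1 \<in> ?T" "t2 \<in> ?T" "g t1 = g t2"
    obtain c1 where "t1 = PT [c1]" "nonroot_ok a c1" using t12(1) Tchar by blast
    moreover obtain c2 where "t2 = PT [c2]" "nonroot_ok a c2" using t12(2) Tchar by blast
    ultimately show "t1 = t2" using inj[OF a0] \<open>g t1 = g t2\<close> by (simp add: g_def)
  qed
  moreover have "g ` ?T = ?P"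
  proof (intro set_eqI iffI)
    fix H assume "H \<in> g ` ?T"
    then obtain t where "t \<in> ?T" "H = g t" by auto
    moreover obtain c where "t = PT [c]" "nonroot_ok a c" "nonroot_nodes a c = m" using \<open>t \<in> ?T\<close> Tchar by blast
    ultimately show "H \<in> ?P" using pyr[OF a0] nl by (simp add: g_def)
  next
    fix H assume H: "H \<in> ?P"
    then obtain c where c: "nonroot_ok a c" "hpf a {} (w c) = H" using surj[OF a0] by blast
    have "card H \<ge> 1" using H assms by simp
    then have "c \<noteq> PT []" using c by auto
    then have "nonroot_nodes a c = m" using pyr[OF a0 c(1)] c H by simp
    then have "PT [c] \<in> ?T" using c Tchar[of "PT [c]"] by blast
    moreover have "g (PT [c]) = H" using c by (simp add: g_def)
    ultimately show "H \<in> g ` ?T" by (metis image_eqI)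
  qed
  ultimately have "bij_betw g ?T ?P" by (simp add: bij_betw_def)
  then show ?thesis using bij_betw_inv_into by blast
qed

end
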